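(* Let $P$ be a finite set of $m$ points in the plane, $\mathcal{R}$ a finite family of axis-aligned rectangles, $k\ge1$ an integer and $\alpha$ an integer with $1\le\alpha\le k$. Let $m^*$ be the maximum number of points of $P$ that can be exposed by deleting $k$ rectangles from $\mathcal{R}$, and let $m'$ be the value returned by the algorithm Greedy-Bicriteria with parameter $\alpha$. Then there is an absolute constant $c>0$ such that $m'\ge \alpha m^*/(ck^2)$; moreover the algorithm deletes at most $\alpha k$ rectangles, and the $m'$ points counted are exposed after these deletions.
   Context: A point $p$ is exposed with respect to a family $\mathcal{R}'$ of ranges if it lies in no range of $\mathcal{R}'$. For $p\in P$, $\mathcal{R}(p)$ denotes the set of rectangles in $\mathcal{R}$ containing $p$. Algorithm Greedy-Bicriteria: first discard all points $p$ with $|\mathcal{R}(p)|>k$. Partition the remaining points into groups (equivalence classes) $G_1,G_2,\dots$, where two points $p,p'$ lie in the same group iff $\mathcal{R}(p)=\mathcal{R}(p')$. Sort the groups so that $|G_1|\ge|G_2|\ge\cdots$, delete all rectangles containing the points of the first $\alpha$ groups, and return $m'=\sum_{1\le i\le\alpha}|G_i|$ as the number of exposed points. *)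

theory Defs
  imports Main "HOL-Library.Product_Plus" Complex_Main
begin

type_synonym pt = "real \<times> real"

definition axis_rect :: "pt set \<Rightarrow> bool" where
  "axis_rect S \<longleftrightarrow> (\<exists>a b c d. a \<le> b \<and> c \<le> d \<and> S = {a..b} \<times> {c..d})"

definition ranges_at :: "pt set set \<Rightarrow> pt \<Rightarrow> pt set set" where
  "ranges_at R p = {r \<in> R. p \<in> r}"

definition exposed :: "pt set set \<Rightarrow> pt \<Rightarrow> bool" where
  "exposed R' p \<longleftrightarrow> (\<forall>r\<in>R'. p \<notin> r)"

definition max_exposed :: "pt set set \<Rightarrow> pt set \<Rightarrow> nat \<Rightarrow> nat" where
  "max_exposed R P k = Max {card {p \<in> P. exposed (R - D) p} | D. D \<subseteq> R \<and> card D \<le> k}"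

definition surviving :: "pt set set \<Rightarrow> pt set \<Rightarrow> nat \<Rightarrow> pt set" where
  "surviving R P k = {p \<in> P. card (ranges_at R p) \<le> k}"

definition groups :: "pt set set \<Rightarrow> pt set \<Rightarrow> nat \<Rightarrow> pt set set" where
  "groups R P k = (\<lambda>p. {q \<in> surviving R P k. ranges_at R q = ranges_at R p}) ` surviving R P k"

text \<open>Gs is a possible choice of the first alpha groups in some order of
  non-increasing size (all of them if there are fewer than alpha).\<close>
definition greedy_choice :: "pt set set \<Rightarrow> pt set \<Rightarrow> nat \<Rightarrow> nat \<Rightarrow> pt set set \<Rightarrow> bool" where
  "greedy_choice R P k \<alpha> Gs \<longleftrightarrow>
     Gs \<subseteq> groups R P k \<and> card Gs = min \<alpha> (card (groups R P k)) \<and>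
     (\<forall>G\<in>Gs. \<forall>H\<in>groups R P k - Gs. card H \<le> card G)"

definition greedy_deleted :: "pt set set \<Rightarrow> pt set set \<Rightarrow> pt set set" where
  "greedy_deleted R Gs = (\<Union>G\<in>Gs. \<Union>p\<in>G. ranges_at R p)"

definition greedy_value :: "pt set set \<Rightarrow> nat" where
  "greedy_value Gs = (\<Sum>G\<in>Gs. card G)"

end

theory Submission imports Defs begin
definition sig :: "real set \<Rightarrow> real \<Rightarrow> real set \<times> real set" where
  "sig X x = ({t\<in>X. t<x}, {t\<in>X. t\<le>x})"

lemma sig_inj_aux:
  assumes "finite X" "x \<le> y" "card (fst (sig X x)) + card (snd (sig X x)) = card (fst (sig X y)) + card (snd (sig X y))"
  shows "sig X x = sig X y"
proof -
  have s1: "{t\<in>X. t<x} \<subseteq> {t\<in>X. t<y}" "{t\<in>X. t\<le>x} \<subseteq> {t\<in>X. t\<le>y}" using assms(2) by auto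
  have f: "finite {t\<in>X. t<y}" "finite {t\<in>X. t\<le>y}" using assms(1) by auto
  have c1: "card {t\<in>X. t<x} \<le> card {t\<in>X. t<y}" "card {t\<in>X. t\<le>x} \<le> card {t\<in>X. t\<le>y}"
    using s1 f by (auto intro: card_mono)
  then have "card {t\<in>X. t<x} = card {t\<in>X. t<y}" "card {t\<in>X. t\<le>x} = card {t\<in>X. t\<le>y}"
    using assms(3) unfolding sig_def by auto
  then show ?thesis using s1 f card_subset_eq unfolding sig_def by (metis (no_types, lifting))
qed

lemma sig_finite: "finite X \<Longrightarrow> finite (range (sig X))"
  by (rule finite_subset[of _ "Pow X \<times> Pow X"]) (auto simp: sig_def)

lemma sig_count:
  assumes "finite X"
  shows "card (range (sig X)) \<le> 2 * card X + 1"
proof -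
  let ?h = "\<lambda>(L::real set, L'::real set). card L + card L'"
  have inj: "inj_on ?h (range (sig X))"
  proof (rule inj_onI)
    fix u v assume "u \<in> range (sig X)" "v \<in> range (sig X)" "?h u = ?h v"
    then obtain x y where u: "u = sig X x" and v: "v = sig X y" and e: "?h (sig X x) = ?h (sig X y)" by auto
    have e': "card (fst (sig X x)) + card (snd (sig X x)) = card (fst (sig X y)) + card (snd (sig X y))"
      using e by (simp add: case_prod_beta)
    show "u = v"
    proof (cases "x \<le> y")
      case True then show ?thesis using sig_inj_aux[OF assms True e'] u v by simp
    next
      case False then have yx: "y \<le> x" by simp
      show ?thesis using sig_inj_aux[OF assms yx e'[symmetric]] u v by simp
    qed
  qed
  have sub: "?h ` range (sig X) \<subseteq> {0..2 * card X}"
  proof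
    fix n assume "n \<in> ?h ` range (sig X)"
    then obtain x where n: "n = ?h (sig X x)" by blast
    have "card {t\<in>X. t<x} \<le> card X" "card {t\<in>X. t\<le>x} \<le> card X"
      using assms by (auto intro: card_mono)
    then show "n \<in> {0..2 * card X}" using n unfolding sig_def by simp
  qed
  have "card (range (sig X)) = card (?h ` range (sig X))" using card_image[OF inj] by simp
  also have "\<dots> \<le> card {0..2 * card X}" using sub by (intro card_mono) auto
  finally show ?thesis by simp
qed

lemma card_two_images: "finite D \<Longrightarrow> card (A ` D \<union> B ` D) \<le> 2 * card D"
proof -
  assume "finite D"
  have "card (A ` D \<union> B ` D) \<le> card (A ` D) + card (B ` D)" by (rule card_Un_le)
  also have "\<dots> \<le> card D + card D" by (intro add_mono card_image_le \<open>finite D\<close>)+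
  finally show ?thesis by simp
qed

lemma cells_count:
  assumes "finite D" "\<forall>r\<in>D. axis_rect r"
  shows "card ((\<lambda>p::pt. {r\<in>D. p\<in>r}) ` UNIV) \<le> (4 * card D + 1)^2"
proof -
  from assms(2) have "\<forall>r\<in>D. \<exists>a b c d. a \<le> b \<and> c \<le> d \<and> r = {a..b} \<times> {c..d}"
    unfolding axis_rect_def by blast
  then obtain A B C E where ABCE: "\<forall>r\<in>D. r = {A r..B r} \<times> {C r..E r}"
    by metis
  define X where "X = A ` D \<union> B ` D"
  define Y where "Y = C ` D \<union> E ` D"
  have fX: "finite X" "card X \<le> 2 * card D" unfolding X_def using assms(1)
    by (auto intro: card_two_images)
  have fY: "finite Y" "card Y \<le> 2 * card D" unfolding Y_def using assms(1)
    by (auto intro: card_two_images)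
  define h where "h = (\<lambda>(sx::real set \<times> real set, sy::real set \<times> real set).
     {r\<in>D. A r \<in> snd sx \<and> B r \<notin> fst sx \<and> C r \<in> snd sy \<and> E r \<notin> fst sy})"
  have eq: "{r\<in>D. p\<in>r} = h (sig X (fst p), sig Y (snd p))" for p :: pt
  proof -
    have "p \<in> r \<longleftrightarrow> (A r \<in> snd (sig X (fst p)) \<and> B r \<notin> fst (sig X (fst p)) \<and>
        C r \<in> snd (sig Y (snd p)) \<and> E r \<notin> fst (sig Y (snd p)))" if "r \<in> D" for r
    proof -
      have "p \<in> r \<longleftrightarrow> A r \<le> fst p \<and> fst p \<le> B r \<and> C r \<le> snd p \<and> snd p \<le> E r"
        using ABCE that by (cases p) (metis SigmaE SigmaI atLeastAtMost_iff prod.sel)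
      then show ?thesis using that unfolding sig_def X_def Y_def by auto
    qed
    then show ?thesis unfolding h_def by auto
  qed
  have "(\<lambda>p::pt. {r\<in>D. p\<in>r}) ` UNIV \<subseteq> h ` (range (sig X) \<times> range (sig Y))"
    using eq by auto
  then have "card ((\<lambda>p::pt. {r\<in>D. p\<in>r}) ` UNIV) \<le> card (h ` (range (sig X) \<times> range (sig Y)))"
    using sig_finite fX fY by (intro card_mono) (auto intro: finite_imageI)
  also have "\<dots> \<le> card (range (sig X) \<times> range (sig Y))" by (rule card_image_le)
    (use sig_finite fX fY in \<open>auto\<close>)
  also have "\<dots> = card (range (sig X)) * card (range (sig Y))" by (rule card_cartesian_product)
  also have "\<dots> \<le> (2 * card X + 1) * (2 * card Y + 1)"
    using sig_count fX fY by (intro mult_mono) auto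
  also have "\<dots> \<le> (4 * card D + 1) * (4 * card D + 1)"
    using fX fY by (intro mult_mono) auto
  finally show ?thesis by (simp add: power2_eq_square)
qed

lemma main_bound:
  assumes fP: "finite P" and fR: "finite R" and rect: "\<forall>r\<in>R. axis_rect r"
    and k1: "1 \<le> k" and a1: "1 \<le> \<alpha>" and ak: "\<alpha> \<le> k"
    and gc: "greedy_choice R P k \<alpha> Gs"
  shows "\<alpha> * max_exposed R P k \<le> 50 * k^2 * greedy_value Gs"
    and "card (greedy_deleted R Gs) \<le> \<alpha> * k"
    and "\<forall>p\<in>\<Union>Gs. exposed (R - greedy_deleted R Gs) p"
proof -
  define surv where "surv = surviving R P k"
  define grp where "grp = groups R P k"
  define S where "S = greedy_value Gs"
  have fsurv: "finite surv" using fP unfolding surv_def surviving_def by auto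
  have fgrp: "finite grp" using fsurv unfolding grp_def groups_def surv_def by auto
  have Gsg: "Gs \<subseteq> grp" and cGs: "card Gs = min \<alpha> (card grp)"
    and big: "\<forall>G\<in>Gs. \<forall>H\<in>grp - Gs. card H \<le> card G"
    using gc unfolding greedy_choice_def grp_def by auto
  have fGs: "finite Gs" using Gsg fgrp finite_subset by blast
  have grpE: "\<exists>p\<in>surv. G = {q\<in>surv. ranges_at R q = ranges_at R p}" if "G \<in> grp" for G
    using that unfolding grp_def groups_def surv_def by auto
  show "\<forall>p\<in>\<Union>Gs. exposed (R - greedy_deleted R Gs) p"
    unfolding exposed_def greedy_deleted_def ranges_at_def by blast
  show "card (greedy_deleted R Gs) \<le> \<alpha> * k"
  proof -
    have each: "card (\<Union>p\<in>G. ranges_at R p) \<le> k" if GG: "G \<in> Gs" for G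
    proof -
      obtain p where p: "p \<in> surv" "G = {q\<in>surv. ranges_at R q = ranges_at R p}"
        using grpE GG Gsg by blast
      have "(\<Union>p\<in>G. ranges_at R p) \<subseteq> ranges_at R p" using p by auto
      then have "card (\<Union>p\<in>G. ranges_at R p) \<le> card (ranges_at R p)"
        using fR by (intro card_mono) (auto simp: ranges_at_def)
      also have "\<dots> \<le> k" using p unfolding surv_def surviving_def by auto
      finally show ?thesis .
    qed
    have "card (greedy_deleted R Gs) \<le> (\<Sum>G\<in>Gs. card (\<Union>p\<in>G. ranges_at R p))"
      unfolding greedy_deleted_def using fGs by (rule card_UN_le)
    also have "\<dots> \<le> card Gs * k" using sum_bounded_above[of Gs _ k] each by simp
    also have "\<dots> \<le> \<alpha> * k" using cGs by simp
    finally show ?thesis .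
  qed
  define Dsets where "Dsets = {D. D \<subseteq> R \<and> card D \<le> k}"
  have fin: "finite ((\<lambda>D. card {p \<in> P. exposed (R - D) p}) ` Dsets)"
    using fR unfolding Dsets_def by (intro finite_imageI) (auto intro: rev_finite_subset[of "Pow R"])
  have ne: "(\<lambda>D. card {p \<in> P. exposed (R - D) p}) ` Dsets \<noteq> {}"
    unfolding Dsets_def by auto
  have "max_exposed R P k = Max ((\<lambda>D. card {p \<in> P. exposed (R - D) p}) ` Dsets)"
    unfolding max_exposed_def Dsets_def by (simp add: image_def) (metis)
  then have "max_exposed R P k \<in> (\<lambda>D. card {p \<in> P. exposed (R - D) p}) ` Dsets"
    using Max_in[OF fin ne] by simp
  then obtain D where DR: "D \<subseteq> R" and Dk: "card D \<le> k"
    and mE: "max_exposed R P k = card {p \<in> P. exposed (R - D) p}"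
    unfolding Dsets_def by auto
  define E where "E = {p \<in> P. exposed (R - D) p}"
  have fD: "finite D" using DR fR finite_subset by blast
  have ranE: "ranges_at R p = {r\<in>D. p\<in>r}" if "p \<in> E" for p
    using that DR unfolding E_def exposed_def ranges_at_def by auto
  define Og where "Og = {G\<in>grp. G \<subseteq> E}"
  define cls where "cls = (\<lambda>A. {q\<in>surv. ranges_at R q = A})"
  have fO: "finite Og" using fgrp unfolding Og_def by auto
  have EO: "E \<subseteq> \<Union>Og"
  proof
    fix p assume pE: "p \<in> E"
    have "card (ranges_at R p) \<le> k"
      using ranE[OF pE] Dk fD by (metis (no_types, lifting) card_mono mem_Collect_eq order_trans subsetI)
    then have ps: "p \<in> surv" using pE unfolding surv_def surviving_def E_def by auto
    have "cls (ranges_at R p) \<in> grp" using ps unfolding cls_def grp_def groups_def surv_def by auto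
    moreover have "cls (ranges_at R p) \<subseteq> E"
    proof
      fix q assume "q \<in> cls (ranges_at R p)"
      then have "q \<in> surv" "ranges_at R q = ranges_at R p" unfolding cls_def by auto
      then show "q \<in> E" using ranE[OF pE] unfolding E_def surv_def surviving_def exposed_def ranges_at_def
        by auto
    qed
    moreover have "p \<in> cls (ranges_at R p)" using ps unfolding cls_def by auto
    ultimately show "p \<in> \<Union>Og" unfolding Og_def by auto
  qed
  have cardE: "card E \<le> (\<Sum>G\<in>Og. card G)"
  proof -
    have "finite (\<Union>Og)" unfolding Og_def E_def using fP by (rule rev_finite_subset) auto
    then have "card E \<le> card (\<Union>Og)" using EO card_mono by blast
    also have "\<dots> \<le> (\<Sum>G\<in>Og. card G)" by (rule card_Union_le_sum_card)
    finally show ?thesis .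
  qed
  define N where "N = 25 * k^2"
  have cO: "card Og \<le> N"
  proof -
    have "Og \<subseteq> cls ` ((\<lambda>p::pt. {r\<in>D. p\<in>r}) ` UNIV)"
    proof
      fix G assume G: "G \<in> Og"
      then obtain p where p: "p \<in> surv" "G = cls (ranges_at R p)"
        using grpE unfolding Og_def cls_def by blast
      then have "p \<in> G" unfolding cls_def by auto
      then have "p \<in> E" using G unfolding Og_def by auto
      then show "G \<in> cls ` ((\<lambda>p::pt. {r\<in>D. p\<in>r}) ` UNIV)" using p ranE by auto
    qed
    moreover have frng: "finite ((\<lambda>p::pt. {r\<in>D. p\<in>r}) ` UNIV)"
      by (rule finite_subset[of _ "Pow D"]) (auto simp: fD)
    ultimately have "card Og \<le> card (cls ` ((\<lambda>p::pt. {r\<in>D. p\<in>r}) ` UNIV))"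
      by (meson card_mono finite_imageI)
    also have "\<dots> \<le> card ((\<lambda>p::pt. {r\<in>D. p\<in>r}) ` UNIV)" by (rule card_image_le[OF frng])
    also have "\<dots> \<le> (4 * card D + 1)^2" using cells_count fD rect DR by blast
    also have "\<dots> \<le> (4 * k + 1)^2" using Dk by (intro power_mono) auto
    also have "\<dots> \<le> N"
    proof -
      have kk: "k \<le> k^2" using k1 by (simp add: power2_eq_square)
      have ex: "(4*k+1)^2 = 16*k^2 + 8*k + 1" by (simp only: power2_eq_square) algebra
      show ?thesis unfolding N_def ex using kk k1 by linarith
    qed
    finally show ?thesis .
  qed
  have sumO: "(\<Sum>G\<in>Og. card G) = (\<Sum>G\<in>Og \<inter> Gs. card G) + (\<Sum>G\<in>Og - Gs. card G)"
    using fO by (metis Int_Diff_disjoint Int_Diff_Un finite_Int finite_Diff sum.union_disjoint)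
  have s1: "(\<Sum>G\<in>Og \<inter> Gs. card G) \<le> S" unfolding S_def greedy_value_def
    using fGs by (intro sum_mono2) auto
  have kN: "k \<le> N" unfolding N_def using k1 by (simp add: power2_eq_square)
  have "\<alpha> * card E \<le> 2 * N * S"
  proof (cases "Og \<subseteq> Gs")
    case True
    then have "Og - Gs = {}" by auto
    then have "(\<Sum>G\<in>Og - Gs. card G) = 0" by (simp only: sum.empty)
    then have "card E \<le> S" using cardE sumO s1 by linarith
    then have "\<alpha> * card E \<le> k * S" using ak by (intro mult_mono) auto
    also have "\<dots> \<le> 2 * N * S" using kN by (intro mult_right_mono) auto
    finally show ?thesis .
  next
    case False
    then obtain H where H: "H \<in> Og" "H \<notin> Gs" by auto
    then have "Gs \<noteq> grp" unfolding Og_def by auto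
    then have "card Gs \<noteq> card grp" using Gsg fgrp card_subset_eq by blast
    then have cG: "card Gs = \<alpha>" using cGs by linarith
    then have GsNE: "Gs \<noteq> {}" using a1 by auto
    define g where "g = Min (card ` Gs)"
    have gle: "g \<le> card G" if "G \<in> Gs" for G unfolding g_def using fGs that by auto
    have gin: "g \<in> card ` Gs" unfolding g_def using fGs GsNE by (intro Min_in) auto
    have Hg: "card H' \<le> g" if "H' \<in> Og - Gs" for H'
      using gin big that unfolding Og_def by auto
    have s2: "(\<Sum>G\<in>Og - Gs. card G) \<le> N * g"
    proof -
      have "(\<Sum>G\<in>Og - Gs. card G) \<le> card (Og - Gs) * g" using sum_bounded_above[of "Og - Gs" card g] Hg by simp
      also have "\<dots> \<le> N * g" using cO card_mono[OF fO, of "Og - Gs"] by (intro mult_right_mono) auto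
      finally show ?thesis .
    qed
    have s3: "\<alpha> * g \<le> S" unfolding S_def greedy_value_def
      using sum_bounded_below[of Gs g card] gle cG by simp
    have "card E \<le> S + N * g" using cardE sumO s1 s2 by linarith
    then have "\<alpha> * card E \<le> \<alpha> * (S + N * g)" by (rule mult_left_mono) simp
    also have "\<dots> = \<alpha> * S + N * (\<alpha> * g)" by (simp add: algebra_simps)
    finally have "\<alpha> * card E \<le> \<alpha> * S + N * (\<alpha> * g)" .
    also have "\<dots> \<le> N * S + N * S" using ak kN s3 by (intro add_mono mult_mono) auto
    finally show ?thesis by simp
  qed
  then show "\<alpha> * max_exposed R P k \<le> 50 * k^2 * greedy_value Gs"
    using mE unfolding E_def N_def S_def by simp
qed

theorem mainTheorem6:
  shows "\<exists>c::real. c > 0 \<and>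
    (\<forall>(P::pt set) (R::pt set set) (k::nat) (\<alpha>::nat) (Gs::pt set set).
       finite P \<and> finite R \<and> (\<forall>r\<in>R. axis_rect r) \<and> 1 \<le> k \<and> 1 \<le> \<alpha> \<and> \<alpha> \<le> k \<and>
       greedy_choice R P k \<alpha> Gs \<longrightarrow>
         real \<alpha> * real (max_exposed R P k) / (c * real k ^ 2) \<le> real (greedy_value Gs) \<and>
         card (greedy_deleted R Gs) \<le> \<alpha> * k \<and>
         (\<forall>p\<in>\<Union>Gs. exposed (R - greedy_deleted R Gs) p))"
proof (intro exI[of _ 50] conjI allI impI)
  fix P R k \<alpha> Gs
  assume A: "finite P \<and> finite R \<and> (\<forall>r\<in>R. axis_rect r) \<and> 1 \<le> k \<and> 1 \<le> \<alpha> \<and> \<alpha> \<le> k \<and>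
       greedy_choice R P k \<alpha> Gs"
  note mb = main_bound[of P R k \<alpha> Gs]
  show "card (greedy_deleted R Gs) \<le> \<alpha> * k" using mb A by blast
  show "\<forall>p\<in>\<Union>Gs. exposed (R - greedy_deleted R Gs) p" using mb A by blast
  have n: "\<alpha> * max_exposed R P k \<le> 50 * k^2 * greedy_value Gs" using mb A by blast
  have r: "real \<alpha> * real (max_exposed R P k) \<le> 50 * real k ^ 2 * real (greedy_value Gs)"
    using of_nat_mono[OF n] by simp
  have pos: "0 < (50::real) * real k ^ 2" using A by simp
  show "real \<alpha> * real (max_exposed R P k) / (50 * real k ^ 2) \<le> real (greedy_value Gs)"
    using r pos by (simp add: divide_le_eq mult.commute)
qed (simp)

end
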